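(* The map $f\colon D_{uz}\to\mathbb{R}^2$ is injective; hence $f$ is a bijection from $D_{uz}$ onto $D_{ab}=f(D_{uz})$.
   Context: Let $D_{uz}=\{(u,z)\in\mathbb{R}^2: 0<u<1,\ 0<z<1\}$. Define $f\colon D_{uz}\to\mathbb{R}^2$ by $f(u,z)=(a(u,z),b(u,z))$, where $a(u,z)$ and $b(u,z)$ are the positive real numbers determined by $$a^2=\frac{u^2+z^2}{u^2z^2+1},\qquad b^2=\frac{(1+u^2)(1+z^2)-2z(1-u^2)}{(1+u^2)(1+z^2)+2z(1-u^2)}$$ (both right-hand sides are positive on $D_{uz}$). Let $D_{ab}=f(D_{uz})$. *)

theory Defs
  imports Complex_Main
begin

definition D_uz :: "(real \<times> real) set" where
  "D_uz = {(u, z). 0 < u \<and> u < 1 \<and> 0 < z \<and> z < 1}"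

definition a_fun :: "real \<Rightarrow> real \<Rightarrow> real" where
  "a_fun u z = sqrt ((u^2 + z^2) / (u^2 * z^2 + 1))"

definition b_fun :: "real \<Rightarrow> real \<Rightarrow> real" where
  "b_fun u z = sqrt (((1 + u^2) * (1 + z^2) - 2 * z * (1 - u^2)) /
                     ((1 + u^2) * (1 + z^2) + 2 * z * (1 - u^2)))"

definition f_map :: "real \<times> real \<Rightarrow> real \<times> real" where
  "f_map p = (a_fun (fst p) (snd p), b_fun (fst p) (snd p))"

definition D_ab :: "(real \<times> real) set" where
  "D_ab = f_map ` D_uz"

end

theory Submission
  imports Defs
begin


lemma fr: "(D::real) > 0 \<Longrightarrow> D + N \<noteq> 0 \<Longrightarrow> (1 - N/D)/(1 + N/D) = (D - N)/(D + N)"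
proof -
  assume a: "D > 0" "D + N \<noteq> 0"
  have 1: "1 - N/D = (D-N)/D" "1 + N/D = (D+N)/D" using a by (simp_all add: field_simps)
  show ?thesis unfolding 1 using a by simp
qed

lemma pA:
  fixes u z :: real
  assumes "0 < u" "0 < z"
  shows "(1 - (u^2 + z^2) / (u^2 * z^2 + 1)) / (1 + (u^2 + z^2) / (u^2 * z^2 + 1))
     = ((1 - u^2)/(1+u^2)) * ((1 - z^2)/(1+z^2))"
proof -
  have h: "u^2 * z^2 + 1 > 0" proof -
    have "u^2 * z^2 \<ge> 0" by simp
    thus ?thesis by linarith
  qed
  have h3: "1 + u^2 > 0" "1 + z^2 > 0" by (simp_all add: add_pos_nonneg)
  have "(u^2 * z^2 + 1) + (u^2 + z^2) = (1+u^2)*(1+z^2)" by algebra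
  moreover have "(u^2 * z^2 + 1) - (u^2 + z^2) = (1-u^2)*(1-z^2)" by algebra
  ultimately show ?thesis using fr[OF h, of "u^2+z^2"] h3 by simp
qed

lemma pB:
  fixes u z :: real
  assumes "0 < u" "u < 1" "0 < z"
  shows "(1 - (((1 + u^2) * (1 + z^2) - 2 * z * (1 - u^2)) /
                     ((1 + u^2) * (1 + z^2) + 2 * z * (1 - u^2)))) /
         (1 + (((1 + u^2) * (1 + z^2) - 2 * z * (1 - u^2)) /
                     ((1 + u^2) * (1 + z^2) + 2 * z * (1 - u^2))))
     = ((1 - u^2)/(1+u^2)) * (2*z/(1+z^2))"
proof -
  have u1: "1 - u^2 > 0" using assms by (simp add: power_less_one_iff abs_less_iff)
  have h3: "1 + u^2 > 0" "1 + z^2 > 0" by (simp_all add: add_pos_nonneg)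
  have d: "(1 + u^2) * (1 + z^2) + 2 * z * (1 - u^2) > 0"
    using u1 h3 assms by (simp add: add_pos_pos)
  have "(1 + u^2) * (1 + z^2) + 2 * z * (1 - u^2) + ((1 + u^2) * (1 + z^2) - 2 * z * (1 - u^2))
     = 2 * ((1 + u^2) * (1 + z^2))" by algebra
  moreover have "(1 + u^2) * (1 + z^2) + 2 * z * (1 - u^2) - ((1 + u^2) * (1 + z^2) - 2 * z * (1 - u^2))
     = 2 * (2 * z * (1 - u^2))" by algebra
  ultimately show ?thesis using fr[OF d, of "(1 + u^2) * (1 + z^2) - 2 * z * (1 - u^2)"] h3
    by simp
qed

lemma circ:
  fixes z :: real
  shows "((1 - z^2)/(1+z^2))^2 + (2*z/(1+z^2))^2 = 1"
proof -
  have h: "1 + z^2 > 0" by (simp add: add_pos_nonneg)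
  have "(1 - z^2)^2 + (2*z)^2 = (1+z^2)^2" by algebra
  thus ?thesis using h by (simp add: power_divide add_divide_distrib[symmetric])
qed

lemma Uinj:
  fixes u v :: real
  assumes "0 < u" "0 < v" "(1 - u^2)/(1+u^2) = (1 - v^2)/(1+v^2)"
  shows "u = v"
proof -
  have h3: "1 + u^2 > 0" "1 + v^2 > 0" by (simp_all add: add_pos_nonneg)
  have "u^2 = v^2" using assms(3) h3 by (simp add: field_simps)
  thus ?thesis using assms by (simp add: power2_eq_iff_nonneg)
qed

lemma sq3: "(b::real)^2 + c^2 = 1 \<Longrightarrow> a^2 = (a*b)^2 + (a*c)^2"
proof -
  assume h: "b^2 + c^2 = 1"
  have "(a*b)^2+(a*c)^2 = a^2*(b^2+c^2)" by algebra
  thus ?thesis using h by simp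
qed

lemma Upos:
  fixes u :: real
  assumes "0 < u" "u < 1"
  shows "(1 - u^2)/(1+u^2) > 0"
proof -
  have u1: "1 - u^2 > 0" using assms by (simp add: power_less_one_iff abs_less_iff)
  have "1 + u^2 > 0" by (simp add: add_pos_nonneg)
  thus ?thesis using u1 by simp
qed

lemma inj: "inj_on f_map D_uz"
proof (rule inj_onI)
  fix p q assume p: "p \<in> D_uz" and q: "q \<in> D_uz" and e: "f_map p = f_map q"
  obtain u z where pp: "p = (u, z)" by force
  obtain v w where qq: "q = (v, w)" by force
  have r: "0 < u" "u < 1" "0 < z" "z < 1" "0 < v" "v < 1" "0 < w" "w < 1"
    using p q pp qq by (auto simp: D_uz_def)
  define U where "U x = (1 - x^2)/(1+x^2)" for x :: real
  define S where "S x = 2*x/(1+x^2)" for x :: real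
  have eA: "(u^2 + z^2) / (u^2 * z^2 + 1) = (v^2 + w^2) / (v^2 * w^2 + 1)"
    using e pp qq by (simp add: f_map_def a_fun_def)
  have eB: "((1 + u^2) * (1 + z^2) - 2 * z * (1 - u^2)) /
                     ((1 + u^2) * (1 + z^2) + 2 * z * (1 - u^2)) =
            ((1 + v^2) * (1 + w^2) - 2 * w * (1 - v^2)) /
                     ((1 + v^2) * (1 + w^2) + 2 * w * (1 - v^2))"
    using e pp qq by (simp add: f_map_def b_fun_def)
  have e1: "U u * U z = U v * U w"
    using pA[of u z] pA[of v w] r eA unfolding U_def by metis
  have e2: "U u * S z = U v * S w"
    using pB[of u z] pB[of v w] r eB unfolding U_def S_def by metis
  have cz: "(U z)^2 + (S z)^2 = 1" using circ unfolding U_def S_def by simp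
  have cw: "(U w)^2 + (S w)^2 = 1" using circ unfolding U_def S_def by simp
  have "(U u)^2 = (U v)^2"
  proof -
    have "(U u)^2 = (U u * U z)^2 + (U u * S z)^2"
      using sq3[OF cz] .
    also have "\<dots> = (U v * U w)^2 + (U v * S w)^2" using e1 e2 by simp
    also have "\<dots> = (U v)^2"
      using sq3[OF cw, of "U v", symmetric] .
    finally show ?thesis .
  qed
  moreover have pu: "U u > 0" using Upos[of u] r unfolding U_def by simp
  moreover have pv: "U v > 0" using Upos[of v] r unfolding U_def by simp
  ultimately have uv: "U u = U v" using power2_eq_iff_nonneg[of "U u" "U v"] by simp
  hence "u = v" using Uinj[of u v] r unfolding U_def by blast
  moreover have "U z = U w" using e1 uv pv by simp
  hence "z = w" using Uinj[of z w] r unfolding U_def by blast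
  ultimately show "p = q" using pp qq by simp
qed

theorem mainTheorem3:
  shows "inj_on f_map D_uz \<and> bij_betw f_map D_uz D_ab"
  using inj by (simp add: bij_betw_def D_ab_def)

end
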